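(* Fix true values $B,\phi\in\mathbb{R}$ and the probe $|\psi_0\rangle=\cos\alpha\,|\lambda_{\max}\rangle+e^{i\psi}\sin\alpha\,|\lambda_{\min}\rangle$ (built with this $\phi$). Consider the family $|\Psi(B',\phi')\rangle=\exp\!\big(-iB'(\cos\phi' J_x+\sin\phi' J_y)\big)|\psi_0\rangle$. Its QFIM with respect to $(\phi',B')$, evaluated at $(\phi',B')=(\phi,B)$, is $$\tilde{\mathcal F}_{\phi\phi}=8\sin^2\!\Big(\frac B2\Big)\big[1-\sin(2\alpha)\cos(\psi+B)\big],\qquad \tilde{\mathcal F}_{BB}=4\sin^2(2\alpha),\qquad \tilde{\mathcal F}_{\phi B}=\tilde{\mathcal F}_{B\phi}=0.$$ In particular, for $\alpha=\pi/4$ and $\psi=\pi-B$ one gets $\tilde{\mathcal F}_{\phi\phi}=16\sin^2(B/2)$ and $\tilde{\mathcal F}_{BB}=4$, which equal $4\max_{|\chi\rangle}\mathrm{Var}_{\chi}(\mathcal{H}_\phi)$ and $4\max_{|\chi\rangle}\mathrm{Var}_{\chi}(\mathcal{H}_B)$ over all single-qutrit pure states $|\chi\rangle$, where $\mathcal{H}_\phi,\mathcal{H}_B$ are the effective Hamiltonians of this family at $(\phi,B)$.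
   Context: $\bm J=(J_x,J_y,J_z)^T$ are the spin-1 angular momentum matrices with $J_z|1;m\rangle=m|1;m\rangle$, $m\in\{-1,0,1\}$, standard ladder conventions. $|\lambda_{\max}\rangle=\tfrac12e^{i\phi}|1;-1\rangle+\tfrac1{\sqrt2}|1;0\rangle+\tfrac12e^{-i\phi}|1;1\rangle$ and $|\lambda_{\min}\rangle=\tfrac12e^{i\phi}|1;-1\rangle-\tfrac1{\sqrt2}|1;0\rangle+\tfrac12e^{-i\phi}|1;1\rangle$; $\alpha\in[0,\pi/2]$, $\psi\in[-\pi,\pi]$. For a pure-state family $|\Psi(\bm x)\rangle$ the QFIM is $\mathcal F_{ij}=4\,\mathrm{Re}\big[\langle\partial_i\Psi|\partial_j\Psi\rangle-\langle\partial_i\Psi|\Psi\rangle\langle\Psi|\partial_j\Psi\rangle\big]$. For a unitary family $U(\bm x)|\chi\rangle$, effective Hamiltonians are $\mathcal{H}_j=i(\partial_jU^\dagger)U$; $\mathrm{Var}_\chi(A)=\langle\chi|A^2|\chi\rangle-\langle\chi|A|\chi\rangle^2$. *)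

theory Defs
  imports "HOL-Analysis.Analysis"
begin

text \<open>Index type 3 of the Hilbert space C^3; the index i corresponds to the
  magnetic quantum number mq i: 0 ~ m=1, 1 ~ m=0, 2 ~ m=-1.\<close>

definition mq :: "3 \<Rightarrow> int" where
  "mq i = (if i = 0 then 1 else if i = 1 then 0 else -1)"

definition ket :: "int \<Rightarrow> complex^3" where
  "ket m = (\<chi> i. if mq i = m then 1 else 0)"

definition cscaleM :: "complex \<Rightarrow> complex^'n^'m \<Rightarrow> complex^'n^'m" where
  "cscaleM c A = (\<chi> i j. c * A$i$j)"

definition cscaleV :: "complex \<Rightarrow> complex^'n \<Rightarrow> complex^'n" where
  "cscaleV c v = (\<chi> i. c * v$i)"

definition Jplus :: "complex^3^3" where
  "Jplus = (\<chi> i j. if mq i = mq j + 1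
                     then complex_of_real (sqrt (real_of_int (2 - mq j * (mq j + 1)))) else 0)"

definition Jminus :: "complex^3^3" where
  "Jminus = (\<chi> i j. if mq i = mq j - 1
                     then complex_of_real (sqrt (real_of_int (2 - mq j * (mq j - 1)))) else 0)"

definition Jx :: "complex^3^3" where
  "Jx = cscaleM (1/2) (Jplus + Jminus)"

definition Jy :: "complex^3^3" where
  "Jy = cscaleM (1/(2*\<i>)) (Jplus - Jminus)"

definition Jz :: "complex^3^3" where
  "Jz = (\<chi> i j. if i = j then of_int (mq i) else 0)"

definition braket :: "complex^'n \<Rightarrow> complex^'n \<Rightarrow> complex" where
  "braket u v = (\<Sum>i\<in>UNIV. cnj (u$i) * v$i)"

definition adjoint :: "complex^'n^'n \<Rightarrow> complex^'n^'n" where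
  "adjoint A = (\<chi> i j. cnj (A$j$i))"

fun mpow :: "complex^'n^'n \<Rightarrow> nat \<Rightarrow> complex^'n^'n" where
  "mpow A 0 = mat 1"
| "mpow A (Suc k) = A ** mpow A k"

definition mexp :: "complex^'n^'n \<Rightarrow> complex^'n^'n" where
  "mexp A = (\<Sum>k. (1 / fact k :: real) *\<^sub>R mpow A k)"

definition lam_max :: "real \<Rightarrow> complex^3" where
  "lam_max \<phi> = cscaleV (exp (\<i> * complex_of_real \<phi>) / 2) (ket (-1)) + cscaleV (complex_of_real (1 / sqrt 2)) (ket 0)
               + cscaleV (exp (- \<i> * complex_of_real \<phi>) / 2) (ket 1)"

definition lam_min :: "real \<Rightarrow> complex^3" where
  "lam_min \<phi> = cscaleV (exp (\<i> * complex_of_real \<phi>) / 2) (ket (-1)) - cscaleV (complex_of_real (1 / sqrt 2)) (ket 0)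
               + cscaleV (exp (- \<i> * complex_of_real \<phi>) / 2) (ket 1)"

definition probe :: "real \<Rightarrow> real \<Rightarrow> real \<Rightarrow> complex^3" where
  "probe \<phi> \<alpha> \<psi> = cscaleV (complex_of_real (cos \<alpha>)) (lam_max \<phi>)
                    + cscaleV (exp (\<i> * complex_of_real \<psi>) * complex_of_real (sin \<alpha>)) (lam_min \<phi>)"

definition Uop :: "real \<Rightarrow> real \<Rightarrow> complex^3^3" where
  "Uop \<phi>' B' = mexp (cscaleM (- \<i> * complex_of_real B') (cos \<phi>' *\<^sub>R Jx + sin \<phi>' *\<^sub>R Jy))"

definition Psi :: "complex^3 \<Rightarrow> real \<Rightarrow> real \<Rightarrow> complex^3" where
  "Psi \<psi>0 \<phi>' B' = Uop \<phi>' B' *v \<psi>0"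

definition pd1 :: "(real \<Rightarrow> real \<Rightarrow> 'a::real_normed_vector) \<Rightarrow> real \<Rightarrow> real \<Rightarrow> 'a" where
  "pd1 f a b = vector_derivative (\<lambda>t. f t b) (at a)"

definition pd2 :: "(real \<Rightarrow> real \<Rightarrow> 'a::real_normed_vector) \<Rightarrow> real \<Rightarrow> real \<Rightarrow> 'a" where
  "pd2 f a b = vector_derivative (\<lambda>t. f a t) (at b)"

definition qfim :: "(real \<Rightarrow> real \<Rightarrow> complex^'n) \<Rightarrow> real \<Rightarrow> real \<Rightarrow> nat \<Rightarrow> nat \<Rightarrow> real" where
  "qfim f a b i j =
     (let d = (\<lambda>k. if k = 1 then pd1 f a b else pd2 f a b); u = f a b in
      4 * Re (braket (d i) (d j) - braket (d i) u * braket u (d j)))"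

definition effH :: "(real \<Rightarrow> real \<Rightarrow> complex^'n^'n) \<Rightarrow> real \<Rightarrow> real \<Rightarrow> nat \<Rightarrow> complex^'n^'n" where
  "effH U a b j =
     cscaleM \<i> ((if j = 1 then pd1 (\<lambda>x y. adjoint (U x y)) a b
                else pd2 (\<lambda>x y. adjoint (U x y)) a b) ** U a b)"

definition variance :: "complex^'n \<Rightarrow> complex^'n^'n \<Rightarrow> complex" where
  "variance s A = braket s ((A ** A) *v s) - (braket s (A *v s))^2"

definition is_max_of :: "real set \<Rightarrow> real \<Rightarrow> bool" where
  "is_max_of S m \<longleftrightarrow> m \<in> S \<and> (\<forall>x\<in>S. x \<le> m)"

end

theory Submission imports Defs begin

lemma three_eq0: "(3::3) = 0" by simp

lemma forall3: "(\<forall>i::3. P i) \<longleftrightarrow> P 0 \<and> P 1 \<and> P 2"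
  using forall_3[of P] by (auto simp add: three_eq0)

lemma sum3: "sum f (UNIV::3 set) = f 0 + f 1 + f 2"
  using sum_3[of f] by (simp add: three_eq0 ac_simps)

definition mat3 :: "complex \<Rightarrow> complex \<Rightarrow> complex \<Rightarrow> complex \<Rightarrow> complex \<Rightarrow> complex \<Rightarrow> complex \<Rightarrow> complex \<Rightarrow> complex \<Rightarrow> complex^3^3" where
  "mat3 a00 a01 a02 a10 a11 a12 a20 a21 a22 = (\<chi> i j.
     if i = 0 then (if j = 0 then a00 else if j = 1 then a01 else a02)
     else if i = 1 then (if j = 0 then a10 else if j = 1 then a11 else a12)
     else (if j = 0 then a20 else if j = 1 then a21 else a22))"

definition vec3 :: "complex \<Rightarrow> complex \<Rightarrow> complex \<Rightarrow> complex^3" where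
  "vec3 a0 a1 a2 = (\<chi> i. if i = 0 then a0 else if i = 1 then a1 else a2)"

lemma mat3_nth[simp]:
  "mat3 a00 a01 a02 a10 a11 a12 a20 a21 a22 $ 0 $ 0 = a00"
  "mat3 a00 a01 a02 a10 a11 a12 a20 a21 a22 $ 0 $ 1 = a01"
  "mat3 a00 a01 a02 a10 a11 a12 a20 a21 a22 $ 0 $ 2 = a02"
  "mat3 a00 a01 a02 a10 a11 a12 a20 a21 a22 $ 1 $ 0 = a10"
  "mat3 a00 a01 a02 a10 a11 a12 a20 a21 a22 $ 1 $ 1 = a11"
  "mat3 a00 a01 a02 a10 a11 a12 a20 a21 a22 $ 1 $ 2 = a12"
  "mat3 a00 a01 a02 a10 a11 a12 a20 a21 a22 $ 2 $ 0 = a20"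
  "mat3 a00 a01 a02 a10 a11 a12 a20 a21 a22 $ 2 $ 1 = a21"
  "mat3 a00 a01 a02 a10 a11 a12 a20 a21 a22 $ 2 $ 2 = a22"
  by (simp_all add: mat3_def)

lemma vec3_nth[simp]:
  "vec3 a0 a1 a2 $ 0 = a0" "vec3 a0 a1 a2 $ 1 = a1" "vec3 a0 a1 a2 $ 2 = a2"
  by (simp_all add: vec3_def)

lemma mat_eq3: "(A::complex^3^3) = B \<longleftrightarrow>
  A$0$0 = B$0$0 \<and> A$0$1 = B$0$1 \<and> A$0$2 = B$0$2 \<and>
  A$1$0 = B$1$0 \<and> A$1$1 = B$1$1 \<and> A$1$2 = B$1$2 \<and>
  A$2$0 = B$2$0 \<and> A$2$1 = B$2$1 \<and> A$2$2 = B$2$2"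
  by (auto simp: vec_eq_iff forall3)

lemma vec_eq3: "(x::complex^3) = y \<longleftrightarrow> x$0 = y$0 \<and> x$1 = y$1 \<and> x$2 = y$2"
  by (auto simp: vec_eq_iff forall3)

lemma mq_simps[simp]: "mq 0 = 1" "mq 1 = 0" "mq 2 = -1"
  by (simp_all add: mq_def)

definition r2 :: complex where "r2 = complex_of_real (sqrt 2)"
lemma r2_sq: "r2 * r2 = 2"
  unfolding r2_def of_real_mult[symmetric] by simp

definition Gm :: "complex \<Rightarrow> complex \<Rightarrow> complex^3^3" where
  "Gm e eb = mat3 0 (eb*r2/2) 0 (e*r2/2) 0 (eb*r2/2) 0 (e*r2/2) 0"

lemma exp_ip: "exp (\<i> * complex_of_real p) = complex_of_real (cos p) + \<i> * complex_of_real (sin p)"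
  by (simp add: complex_eq_iff Re_exp Im_exp)
lemma exp_mip: "exp (- (\<i> * complex_of_real p)) = complex_of_real (cos p) - \<i> * complex_of_real (sin p)"
  by (simp add: complex_eq_iff Re_exp Im_exp)

lemma G_eq: "cos p *\<^sub>R Jx + sin p *\<^sub>R Jy = Gm (exp (\<i> * of_real p)) (exp (- (\<i> * of_real p)))"
  unfolding mat_eq3 exp_ip exp_mip
  apply (simp add: Gm_def Jx_def Jy_def Jplus_def Jminus_def cscaleM_def r2_def)
  apply (simp add: scaleR_conv_of_real field_simps)
  done

definition Pp :: "complex \<Rightarrow> complex \<Rightarrow> complex^3^3" where
  "Pp e eb = mat3 (1/4) (eb*r2/4) (eb*eb/4) (e*r2/4) (1/2) (eb*r2/4) (e*e/4) (e*r2/4) (1/4)"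
definition Pm :: "complex \<Rightarrow> complex \<Rightarrow> complex^3^3" where
  "Pm e eb = mat3 (1/4) (-eb*r2/4) (eb*eb/4) (-e*r2/4) (1/2) (-eb*r2/4) (e*e/4) (-e*r2/4) (1/4)"
definition P0 :: "complex \<Rightarrow> complex \<Rightarrow> complex^3^3" where
  "P0 e eb = mat3 (1/2) 0 (-eb*eb/2) 0 0 0 (-e*e/2) 0 (1/2)"

lemma cscaleM_nth[simp]: "cscaleM c A $ i $ j = c * A $ i $ j"
  by (simp add: cscaleM_def)

lemma mmult_nth3: "((A::complex^3^3) ** B) $ i $ j = A$i$0 * B$0$j + A$i$1 * B$1$j + A$i$2 * B$2$j"
  by (simp add: matrix_matrix_mult_def sum3)

lemma mat1_nth3[simp]: "(mat 1 :: complex^3^3) $ i $ j = (if i = j then 1 else 0)"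
  by (simp add: mat_def)

lemma GPp: "e * eb = 1 \<Longrightarrow> Gm e eb ** Pp e eb = Pp e eb"
  unfolding mat_eq3 mmult_nth3
  by (simp add: Gm_def Pp_def; algebra add: r2_sq)

lemma GPm: "e * eb = 1 \<Longrightarrow> Gm e eb ** Pm e eb = cscaleM (-1) (Pm e eb)"
  unfolding mat_eq3 mmult_nth3
  by (simp add: Gm_def Pm_def; algebra add: r2_sq)

lemma GP0: "e * eb = 1 \<Longrightarrow> Gm e eb ** P0 e eb = cscaleM 0 (P0 e eb)"
  unfolding mat_eq3 mmult_nth3
  by (simp add: Gm_def P0_def; algebra add: r2_sq)

lemma Psum: "Pp e eb + Pm e eb + P0 e eb = mat 1"
  unfolding mat_eq3 by (simp add: Pp_def Pm_def P0_def)

lemma mult_cscale_left: "cscaleM c A ** B = cscaleM c ((A::complex^'n^'n) ** B)"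
  by (simp add: vec_eq_iff matrix_matrix_mult_def sum_distrib_left mult.assoc)
lemma mult_cscale_right: "A ** cscaleM c B = cscaleM c ((A::complex^'n^'n) ** B)"
  by (simp add: vec_eq_iff matrix_matrix_mult_def sum_distrib_left algebra_simps)
lemma cscale_cscale: "cscaleM a (cscaleM b A) = cscaleM (a*b) A"
  by (simp add: vec_eq_iff)
lemma cscale_add: "cscaleM a (A + B) = cscaleM a A + cscaleM a B"
  by (simp add: vec_eq_iff algebra_simps)

lemma mpow_G: assumes "e * eb = 1"
  shows "mpow (cscaleM c (Gm e eb)) k = cscaleM (c^k) (Pp e eb) + cscaleM ((-c)^k) (Pm e eb) + cscaleM (0^k) (P0 e eb)"
proof (induction k)
  case 0
  then show ?case using Psum[of e eb] by (simp add: vec_eq_iff)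
next
  case (Suc k)
  show ?case
    by (simp add: Suc mult_cscale_left matrix_add_ldistrib mult_cscale_right GPp GPm GP0 assms cscale_cscale cscale_add)
       (simp add: vec_eq_iff algebra_simps)
qed

lemma sum_cscale: "(\<Sum>k<n. cscaleM (f k) M) = cscaleM (\<Sum>k<n. f k) (M::complex^'n^'m)"
  by (simp add: vec_eq_iff sum_component sum_distrib_right)

lemma sums_cscale: assumes "f sums s" shows "(\<lambda>k. cscaleM (f k) M) sums cscaleM s (M::complex^'n^'m)"
proof -
  have "(\<lambda>n. \<Sum>k<n. f k) \<longlonglongrightarrow> s" using assms by (simp add: sums_def)
  then have "(\<lambda>n. cscaleM (\<Sum>k<n. f k) M) \<longlonglongrightarrow> cscaleM s M"
    unfolding cscaleM_def by (intro tendsto_intros)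
  then show ?thesis by (simp add: sums_def sum_cscale)
qed

lemma scaleR_cscale: "r *\<^sub>R cscaleM a M = cscaleM (of_real r * a) (M::complex^'n^'m)"
  apply (simp add: vec_eq_iff)
  apply (simp add: scaleR_conv_of_real)
  done

lemma mexp_G: assumes "e * eb = 1"
  shows "mexp (cscaleM c (Gm e eb)) = cscaleM (exp c) (Pp e eb) + cscaleM (exp (-c)) (Pm e eb) + P0 e eb"
proof -
  have ex: "(\<lambda>k. of_real (1 / fact k) * x^k) sums exp x" for x :: complex
  proof -
    have "(\<lambda>k. of_real (1 / fact k) * x^k) = (\<lambda>n. x^n /\<^sub>R fact n)"
      by (rule ext) (simp add: scaleR_conv_of_real divide_inverse mult.commute)
    then show ?thesis using exp_converges[of x] by simp
  qed
  have "(\<lambda>k. (1 / fact k :: real) *\<^sub>R mpow (cscaleM c (Gm e eb)) k) sums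
        (cscaleM (exp c) (Pp e eb) + cscaleM (exp (-c)) (Pm e eb) + cscaleM (exp 0) (P0 e eb))"
    unfolding mpow_G[OF assms] scaleR_add_right scaleR_cscale
    by (intro sums_add sums_cscale ex)
  then show ?thesis unfolding mexp_def
    by (simp add: sums_iff vec_eq_iff)
qed

definition ep :: "real \<Rightarrow> complex" where "ep p = exp (\<i> * complex_of_real p)"
definition em :: "real \<Rightarrow> complex" where "em p = exp (- (\<i> * complex_of_real p))"

lemma ep_em: "ep p * em p = 1"
  by (simp add: ep_def em_def flip: exp_add)
lemma cnj_ep[simp]: "cnj (ep p) = em p" by (simp add: ep_def em_def exp_cnj)
lemma cnj_em[simp]: "cnj (em p) = ep p" by (simp add: ep_def em_def exp_cnj)
lemma cnj_r2[simp]: "cnj r2 = r2" by (simp add: r2_def)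

lemma d_ep[derivative_intros]: "(ep has_vector_derivative (\<i> * ep t)) (at t within s)"
proof -
  have "((\<lambda>x. exp (\<i> * x)) has_field_derivative (\<i> * exp (\<i> * of_real t))) (at (of_real t))"
    by (auto intro!: derivative_eq_intros)
  from has_vector_derivative_real_field[OF this] show ?thesis
    by (simp add: ep_def[abs_def] ep_def)
qed

lemma d_em[derivative_intros]: "(em has_vector_derivative (- \<i> * em t)) (at t within s)"
proof -
  have "((\<lambda>x. exp (- (\<i> * x))) has_field_derivative (- \<i> * exp (- (\<i> * of_real t)))) (at (of_real t))"
    by (auto intro!: derivative_eq_intros)
  from has_vector_derivative_real_field[OF this] show ?thesis
    by (simp add: em_def[abs_def] em_def)
qed

definition Um :: "real \<Rightarrow> real \<Rightarrow> complex^3^3" where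
  "Um p b = cscaleM (em b) (Pp (ep p) (em p)) + cscaleM (ep b) (Pm (ep p) (em p)) + P0 (ep p) (em p)"

lemma Uop_eq: "Uop p b = Um p b"
proof -
  have "Uop p b = mexp (cscaleM (- \<i> * complex_of_real b) (Gm (ep p) (em p)))"
    unfolding Uop_def G_eq ep_def em_def ..
  also have "\<dots> = Um p b"
    unfolding mexp_G[OF ep_em] Um_def by (simp add: ep_def em_def)
  finally show ?thesis .
qed

lemma adj_Um: "adjoint (Um p b) = cscaleM (ep b) (Pp (ep p) (em p)) + cscaleM (em b) (Pm (ep p) (em p)) + P0 (ep p) (em p)"
  unfolding mat_eq3 by (simp add: adjoint_def Um_def Pp_def Pm_def P0_def)

lemma vd_vec:
  assumes "\<And>i. ((\<lambda>t. f t $ i) has_vector_derivative D $ i) (at x)"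
  shows "(f has_vector_derivative D) (at x)"
proof -
  have "((\<lambda>y. ((f y $ i - f x $ i) - (y - x) *\<^sub>R D $ i) /\<^sub>R norm (y - x)) \<longlongrightarrow> 0) (at x)" for i
    using assms[of i] unfolding has_vector_derivative_def has_derivative_at_within by simp
  then have "((\<lambda>y. ((f y - f x) - (y - x) *\<^sub>R D) /\<^sub>R norm (y - x)) \<longlongrightarrow> 0) (at x)"
    by (intro vec_tendstoI) simp
  then show ?thesis
    unfolding has_vector_derivative_def has_derivative_at_within
    by (simp add: bounded_linear_scaleR_left)
qed

lemma vd_mat:
  assumes "\<And>i j. ((\<lambda>t. f t $ i $ j) has_vector_derivative D $ i $ j) (at x)"
  shows "(f has_vector_derivative D) (at x)"
  by (intro vd_vec assms)

lemma vd_mat3: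
  assumes "\<And>i j. i \<in> {0,1,2} \<Longrightarrow> j \<in> {0,1,2} \<Longrightarrow> ((\<lambda>t. (f t :: complex^3^3) $ i $ j) has_vector_derivative D $ i $ j) (at x)"
  shows "(f has_vector_derivative D) (at x)"
proof (intro vd_mat)
  fix i j :: 3
  have "i \<in> {0,1,2}" "j \<in> {0,1,2}" using exhaust_3 three_eq0 by auto
  then show "((\<lambda>t. f t $ i $ j) has_vector_derivative D $ i $ j) (at x)" using assms by blast
qed

definition DUb :: "real \<Rightarrow> real \<Rightarrow> complex^3^3" where
  "DUb p b = cscaleM (- \<i> * em b) (Pp (ep p) (em p)) + cscaleM (\<i> * ep b) (Pm (ep p) (em p))"

definition DUp :: "real \<Rightarrow> real \<Rightarrow> complex^3^3" where
  "DUp p b = (\<chi> i j. - \<i> * of_int (mq i - mq j) * Um p b $ i $ j)"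

lemma Um_db: "((\<lambda>t. Um p t) has_vector_derivative DUb p b) (at b)"
  apply (rule vd_mat3)
  apply (auto simp: Um_def DUb_def Pp_def Pm_def P0_def intro!: derivative_eq_intros)
  done

lemma Um_dp: "((\<lambda>t. Um t b) has_vector_derivative DUp p b) (at p)"
  apply (rule vd_mat3)
  apply (auto simp: Um_def DUp_def Pp_def Pm_def P0_def intro!: derivative_eq_intros)
  apply (simp_all add: algebra_simps)
  done

lemma em_neg: "em (- b) = ep b" and ep_neg: "ep (-b) = em b"
  by (simp_all add: ep_def em_def)

lemma adj_Um': "adjoint (Um p b) = Um p (- b)"
  unfolding adj_Um by (simp add: Um_def em_neg ep_neg)

lemma vd_nth: "(M has_vector_derivative D) F \<Longrightarrow> ((\<lambda>t. M t $ i) has_vector_derivative D $ i) F"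
  by (rule bounded_linear.has_vector_derivative[OF bounded_linear_vec_nth])

lemma vd_mv: assumes "(M has_vector_derivative D) (at t)"
  shows "((\<lambda>t. (M t :: complex^'n^'m) *v x) has_vector_derivative D *v x) (at t)"
proof (rule vd_vec)
  fix i
  have "((\<lambda>t. \<Sum>j\<in>UNIV. M t $ i $ j * x $ j) has_vector_derivative (\<Sum>j\<in>UNIV. D $ i $ j * x $ j)) (at t)"
    by (intro has_vector_derivative_sum has_vector_derivative_mult_left vd_nth assms)
  then show "((\<lambda>t. (M t *v x) $ i) has_vector_derivative (D *v x) $ i) (at t)"
    by (simp add: matrix_vector_mult_def)
qed

lemma r2_inv: "complex_of_real (1 / sqrt 2) = r2 / 2"
proof -
  have "r2 * (r2 / 2) = 1" using r2_sq by simp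
  moreover have "r2 * complex_of_real (1 / sqrt 2) = 1" by (simp add: r2_def flip: of_real_mult)
  moreover have "r2 \<noteq> 0" by (simp add: r2_def)
  ultimately show ?thesis by (metis mult_left_cancel)
qed

lemma r2_inv': "1 / complex_of_real (sqrt 2) = r2 / 2"
  using r2_inv by simp
lemma ep_fold: "exp (\<i> * complex_of_real p) = ep p" by (simp add: ep_def)
lemma em_fold: "exp (- \<i> * complex_of_real p) = em p" "exp (- (\<i> * complex_of_real p)) = em p" by (simp_all add: em_def)

lemma ket_nth[simp]: "ket m $ i = (if mq i = m then 1 else 0)" by (simp add: ket_def)
lemma cscaleV_nth[simp]: "cscaleV c v $ i = c * v $ i" by (simp add: cscaleV_def)

lemma probe_eq: "probe \<phi> \<alpha> \<psi> =
  vec3 ((of_real (cos \<alpha>) + ep \<psi> * of_real (sin \<alpha>)) * em \<phi> / 2)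
       ((of_real (cos \<alpha>) - ep \<psi> * of_real (sin \<alpha>)) * r2 / 2)
       ((of_real (cos \<alpha>) + ep \<psi> * of_real (sin \<alpha>)) * ep \<phi> / 2)"
  unfolding vec_eq3
  by (simp add: probe_def lam_max_def lam_min_def r2_inv' ep_fold em_fold algebra_simps)

lemma Psi_eq: "Psi x p b = Um p b *v x"
  by (simp add: Psi_def Uop_eq)

lemma pd1_Psi: "pd1 (Psi x) p b = DUp p b *v x"
  unfolding pd1_def Psi_eq by (intro vector_derivative_at vd_mv Um_dp)
lemma pd2_Psi: "pd2 (Psi x) p b = DUb p b *v x"
  unfolding pd2_def Psi_eq by (intro vector_derivative_at vd_mv Um_db)

lemma mv3: "(M::complex^3^3) *v x = vec3 (M$0$0 * x$0 + M$0$1 * x$1 + M$0$2 * x$2)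
   (M$1$0 * x$0 + M$1$1 * x$1 + M$1$2 * x$2) (M$2$0 * x$0 + M$2$1 * x$1 + M$2$2 * x$2)"
  unfolding vec_eq3 by (simp add: matrix_vector_mult_def sum3)

lemma braket3: "braket (u::complex^3) v = cnj (u$0) * v$0 + cnj (u$1) * v$1 + cnj (u$2) * v$2"
  by (simp add: braket_def sum3)

lemma i2: "\<i> * \<i> = -1" by simp



definition Umx :: "complex \<Rightarrow> complex \<Rightarrow> complex \<Rightarrow> complex \<Rightarrow> complex^3^3" where
  "Umx e eb E F = cscaleM E (Pp e eb) + cscaleM F (Pm e eb) + P0 e eb"
definition psix :: "complex \<Rightarrow> complex \<Rightarrow> complex \<Rightarrow> complex \<Rightarrow> complex \<Rightarrow> complex^3" where
  "psix e eb w ca sa = vec3 ((ca + w * sa) * eb / 2) ((ca - w * sa) * r2 / 2) ((ca + w * sa) * e / 2)"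

lemma r2c: "r2 * (r2 * x) = 2 * x" using r2_sq by (simp add: mult.assoc[symmetric])
lemma relc: "a * b = 1 \<Longrightarrow> a * (b * x) = (x::complex)" by (simp add: mult.assoc[symmetric])

lemma u_gen: assumes "e*eb = 1" "E*F = 1"
  shows "Umx e eb E F *v psix e eb w ca sa = vec3 ((ca * E + w * sa * F) * eb / 2) ((ca * E - w * sa * F) * r2 / 2) ((ca * E + w * sa * F) * e / 2)"
  unfolding mv3 psix_def vec_eq3
  apply (insert assms r2_sq)
  apply (simp add: Umx_def Pp_def Pm_def P0_def)
  apply (intro conjI)
  apply (simp_all add: field_simps relc r2c)
  apply (algebra+)?
  done

definition DUbx :: "complex \<Rightarrow> complex \<Rightarrow> complex \<Rightarrow> complex \<Rightarrow> complex^3^3" where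
  "DUbx e eb E F = cscaleM (- \<i> * E) (Pp e eb) + cscaleM (\<i> * F) (Pm e eb)"
definition DUpx :: "complex \<Rightarrow> complex \<Rightarrow> complex \<Rightarrow> complex \<Rightarrow> complex^3^3" where
  "DUpx e eb E F = (\<chi> i j. - \<i> * of_int (mq i - mq j) * Umx e eb E F $ i $ j)"

lemma d2_gen: assumes "e*eb = 1" "E*F = 1"
  shows "DUbx e eb E F *v psix e eb w ca sa = vec3 (- \<i> * (ca * E - w * sa * F) * eb / 2) (- \<i> * (ca * E + w * sa * F) * r2 / 2) (- \<i> * (ca * E - w * sa * F) * e / 2)"
  unfolding mv3 psix_def vec_eq3
  apply (insert assms r2_sq)
  apply (simp add: DUbx_def Pp_def Pm_def P0_def)
  apply (intro conjI)
  apply (simp_all add: field_simps relc r2c)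
  apply (algebra+)?
  done

lemma d1_gen: assumes "e*eb = 1" "E*F = 1"
  shows "DUpx e eb E F *v psix e eb w ca sa = vec3 (\<i> * (ca * (1 - E) + w * sa * (1 - F)) * eb / 2) 0 (- \<i> * (ca * (1 - E) + w * sa * (1 - F)) * e / 2)"
  unfolding mv3 psix_def vec_eq3
  apply (insert assms r2_sq)
  apply (simp add: DUpx_def Umx_def Pp_def Pm_def P0_def)
  apply (intro conjI)
  apply (simp_all add: field_simps relc r2c)
  apply (algebra+)?
  done

lemma casa: "ca * ca + sa * sa = 1 \<Longrightarrow> ca * (ca * x) = x - sa * (sa * (x::complex))"
  by (metis add_diff_cancel_right' distrib_right mult.assoc mult_1)

lemma qfim_gen:
  fixes e eb E F w wb ca sa :: complex
  assumes "e*eb = 1" "E*F = 1" "w * wb = 1" "ca * ca + sa * sa = 1"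
    "cnj e = eb" "cnj eb = e" "cnj E = F" "cnj F = E" "cnj w = wb" "cnj ca = ca" "cnj sa = sa"
  defines "u \<equiv> vec3 ((ca * E + w * sa * F) * eb / 2) ((ca * E - w * sa * F) * r2 / 2) ((ca * E + w * sa * F) * e / 2)"
    and "d2 \<equiv> vec3 (- \<i> * (ca * E - w * sa * F) * eb / 2) (- \<i> * (ca * E + w * sa * F) * r2 / 2) (- \<i> * (ca * E - w * sa * F) * e / 2)"
    and "d1 \<equiv> vec3 (\<i> * (ca * (1 - E) + w * sa * (1 - F)) * eb / 2) 0 (- \<i> * (ca * (1 - E) + w * sa * (1 - F)) * e / 2)"
  shows "braket d1 d1 - braket d1 u * braket u d1 = (2 - E - F) / 2 * (1 - ca * sa * (w * F + wb * E))"
    "braket d2 d2 - braket d2 u * braket u d2 = 4 * ca * ca * sa * sa"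
    "braket d1 d2 - braket d1 u * braket u d2 = 0"
    "braket d2 d1 - braket d2 u * braket u d1 = 0"
  unfolding u_def d1_def d2_def braket3
  using assms(1-11) r2_sq
  apply (simp_all add: field_simps relc r2c casa)
  apply (algebra+)?
  done

definition Ax :: "complex \<Rightarrow> complex \<Rightarrow> complex \<Rightarrow> complex \<Rightarrow> complex^3^3" where
  "Ax e eb E F = mat3 (1 - (E + F) / 2) ((F - E) * eb * r2 / 4) 0 ((E - F) * e * r2 / 4) 0 ((F - E) * eb * r2 / 4)
     0 ((E - F) * e * r2 / 4) ((E + F) / 2 - 1)"

lemma H1_gen: assumes "e*eb = 1" "E*F = 1"
  shows "cscaleM \<i> (DUpx e eb F E ** Umx e eb E F) = Ax e eb E F"
  unfolding mat_eq3
  apply (insert assms r2_sq)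
  apply (simp add: mmult_nth3 DUpx_def Umx_def Pp_def Pm_def P0_def Ax_def)
  apply (intro conjI)
  apply (simp_all add: field_simps relc r2c)
  apply (algebra+)?
  done

lemma H2_gen: assumes "e*eb = 1" "E*F = 1"
  shows "cscaleM \<i> (cscaleM (-1) (DUbx e eb F E) ** Umx e eb E F) = cscaleM (-1) (Gm e eb)"
  unfolding mat_eq3
  apply (insert assms r2_sq)
  apply (simp add: mmult_nth3 DUbx_def Umx_def Pp_def Pm_def P0_def Gm_def)
  apply (intro conjI)
  apply (simp_all add: field_simps relc r2c)
  apply (algebra+)?
  done

definition outer :: "complex^'n \<Rightarrow> complex^'n^'n" where
  "outer w = (\<chi> i j. w$i * cnj (w$j))"

lemma Ax_herm: assumes "cnj e = eb" "cnj eb = e" "cnj E = F" "cnj F = E"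
  shows "adjoint (Ax e eb E F) = Ax e eb E F"
  unfolding mat_eq3 using assms by (simp add: adjoint_def Ax_def)

lemma Ax_sq: assumes "e*eb = 1" "E*F = 1" "cnj e = eb" "cnj eb = e" "cnj E = F" "cnj F = E"
  shows "Ax e eb E F ** Ax e eb E F + outer (vec3 ((E - F) * eb * r2 / 4) (1 - (E + F) / 2) ((E - F) * e * r2 / 4))
     = cscaleM (2 - E - F) (mat 1)"
  unfolding mat_eq3
  apply (insert assms r2_sq)
  apply (simp add: mmult_nth3 Ax_def outer_def)
  apply (intro conjI)
  apply (simp_all add: field_simps relc r2c)
  apply (algebra+)?
  done

lemma Ax_att: assumes "e*eb = 1" "E*F = 1" "cnj e = eb" "cnj eb = e" "cnj E = F" "cnj F = E"
  shows "braket (vec3 ((E - F) * eb * r2 / 4) (1 - (E + F) / 2) ((E - F) * e * r2 / 4)) (vec3 (eb * r2 / 2) 0 (- e * r2 / 2)) = 0"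
    "braket (vec3 (eb * r2 / 2) 0 (- e * r2 / 2)) (Ax e eb E F *v vec3 (eb * r2 / 2) 0 (- e * r2 / 2)) = 0"
    "braket (vec3 (eb * r2 / 2) 0 (- e * r2 / 2)) (vec3 (eb * r2 / 2) 0 (- e * r2 / 2)) = 1"
  using assms r2_sq
  apply (simp_all add: braket3 mv3 Ax_def)
  apply (simp_all add: field_simps relc r2c)?
  done

lemma G_herm: assumes "cnj e = eb" "cnj eb = e"
  shows "adjoint (cscaleM (-1) (Gm e eb)) = cscaleM (-1) (Gm e eb)"
  unfolding mat_eq3 using assms by (simp add: adjoint_def Gm_def)

lemma G_sq: assumes "e*eb = 1" "cnj e = eb" "cnj eb = e"
  shows "cscaleM (-1) (Gm e eb) ** cscaleM (-1) (Gm e eb) + outer (vec3 (eb * r2 / 2) 0 (- e * r2 / 2))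
     = cscaleM 1 (mat 1)"
  unfolding mat_eq3
  apply (insert assms r2_sq)
  apply (simp add: mmult_nth3 Gm_def outer_def)
  done

lemma G_att: assumes "e*eb = 1" "cnj e = eb" "cnj eb = e"
  shows "braket (vec3 (eb * r2 / 2) 0 (- e * r2 / 2)) (vec3 (eb * r2 / 2) 0 (e * r2 / 2)) = 0"
    "braket (vec3 (eb * r2 / 2) 0 (e * r2 / 2)) (cscaleM (-1) (Gm e eb) *v vec3 (eb * r2 / 2) 0 (e * r2 / 2)) = 0"
    "braket (vec3 (eb * r2 / 2) 0 (e * r2 / 2)) (vec3 (eb * r2 / 2) 0 (e * r2 / 2)) = 1"
  using assms r2_sq
  apply (simp_all add: braket3 mv3 Gm_def)
  apply (simp_all add: field_simps relc r2c)?
  apply (algebra+)?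
  done

lemma braket_add_right: "braket s (x + y) = braket s x + braket s y"
  by (simp add: braket_def sum.distrib algebra_simps)
lemma braket_diff_right: "braket s (x - y) = braket s x - braket s y"
  by (simp add: braket_def sum_subtractf algebra_simps)
lemma braket_scale_right: "braket s (cscaleV c x) = c * braket s x"
  by (simp add: braket_def sum_distrib_left algebra_simps)
lemma cscaleM_mv: "cscaleM c A *v s = cscaleV c (A *v s)"
  by (simp add: vec_eq_iff matrix_vector_mult_def cscaleM_def cscaleV_def sum_distrib_left algebra_simps)
lemma outer_braket: "braket s (outer w *v s) = cnj (braket w s) * braket w s"
  by (simp add: braket_def outer_def matrix_vector_mult_def sum_distrib_left sum_distrib_right algebra_simps)
lemma cnj_braket: "cnj (braket u v) = braket v u"
  by (simp add: braket_def mult.commute)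
lemma braket_adj: "braket s (H *v t) = braket (adjoint H *v s) t"
  unfolding braket_def matrix_vector_mult_def adjoint_def
  by (simp add: sum_distrib_left sum_distrib_right algebra_simps) (rule sum.swap)

lemma herm_real: "adjoint H = H \<Longrightarrow> cnj (braket s (H *v s)) = braket s (H *v s)"
  by (metis braket_adj cnj_braket)

lemma var_formula:
  assumes "H ** H + outer w = cscaleM (complex_of_real c) (mat 1)" "braket s s = 1" "adjoint H = H"
  shows "Re (variance s H) = c - (cmod (braket w s))^2 - (Re (braket s (H *v s)))^2"
proof -
  have HH: "H ** H = cscaleM (complex_of_real c) (mat 1) - outer w"
    using assms(1) by (metis add_diff_cancel_right')
  have "(cscaleM (complex_of_real c) (mat 1) - outer w) *v s = cscaleV (complex_of_real c) s - outer w *v s"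
    by (simp add: matrix_vector_mult_diff_rdistrib cscaleM_mv)
  then have 1: "braket s ((H ** H) *v s) = complex_of_real c - cnj (braket w s) * braket w s"
    by (simp add: HH braket_diff_right braket_scale_right outer_braket assms(2))
  have "Im (braket s (H *v s)) = 0"
    using herm_real[OF assms(3), of s] by (metis Reals_cnj_iff complex_is_Real_iff)
  then have 2: "braket s (H *v s) = complex_of_real (Re (braket s (H *v s)))"
    by (simp add: complex_eq_iff)
  have 3: "Re (cnj z * z) = (cmod z)^2" for z
    using cmod_power2[of z] by (simp add: power2_eq_square)
  show ?thesis unfolding variance_def 1
    using cmod_power2[of "braket w s"] by (subst 2) (simp add: 3 power2_eq_square flip: of_real_mult)
qed

lemma Um_x: "Um p b = Umx (ep p) (em p) (em b) (ep b)"
  by (simp add: Um_def Umx_def)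
lemma DUp_x: "DUp p b = DUpx (ep p) (em p) (em b) (ep b)"
  by (simp add: DUp_def DUpx_def Um_x)
lemma DUb_x: "DUb p b = DUbx (ep p) (em p) (em b) (ep b)"
  by (simp add: DUb_def DUbx_def)
lemma probe_x: "probe \<phi> \<alpha> \<psi> = psix (ep \<phi>) (em \<phi>) (ep \<psi>) (of_real (cos \<alpha>)) (of_real (sin \<alpha>))"
  by (simp add: probe_eq psix_def)

lemma epem_sum: "ep x + em x = 2 * complex_of_real (cos x)"
  by (simp add: complex_eq_iff ep_def em_def Re_exp Im_exp)
lemma ep_mult: "ep a * ep b = ep (a + b)"
  by (simp add: ep_def algebra_simps flip: exp_add)
lemma em_mult: "em a * em b = em (a + b)"
  by (simp add: em_def algebra_simps flip: exp_add)
lemma em_ep: "em p * ep p = 1" using ep_em[of p] by (simp add: mult.commute)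

lemma pd1_adj: "pd1 (\<lambda>x y. adjoint (Uop x y)) p b = DUp p (- b)"
  unfolding pd1_def Uop_eq adj_Um' by (intro vector_derivative_at Um_dp)

lemma pd2_adj: "pd2 (\<lambda>x y. adjoint (Uop x y)) p b = cscaleM (-1) (DUb p (- b))"
proof -
  have "((\<lambda>t. Um p t) \<circ> uminus has_vector_derivative (-1) *\<^sub>R DUb p (- b)) (at b)"
    by (intro vector_diff_chain_at Um_db) (auto intro!: derivative_eq_intros)
  moreover have "(-1::real) *\<^sub>R DUb p (- b) = cscaleM (-1) (DUb p (- b))"
    by (simp add: vec_eq_iff)
  ultimately show ?thesis
    unfolding pd2_def Uop_eq adj_Um' by (intro vector_derivative_at) (simp add: o_def)
qed

lemma effH1: "effH Uop p b 1 = Ax (ep p) (em p) (em b) (ep b)"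
  unfolding effH_def pd1_adj using H1_gen[OF ep_em[of p] em_ep[of b]]
  by (simp add: Uop_eq DUp_x Um_x em_neg ep_neg)

lemma effH2: "effH Uop p b 2 = cscaleM (-1) (Gm (ep p) (em p))"
  unfolding effH_def pd2_adj using H2_gen[OF ep_em[of p] em_ep[of b]]
  by (simp add: Uop_eq DUb_x Um_x em_neg ep_neg)

lemma max_from_formula:
  assumes "\<And>s. braket s s = 1 \<Longrightarrow> Re (variance s H) = c - (cmod (braket w s))^2 - (Re (braket s (H *v s)))^2"
    and "braket sx sx = 1" "braket w sx = 0" "braket sx (H *v sx) = 0"
  shows "is_max_of {Re (variance s H) | s. braket s s = 1} c"
  unfolding is_max_of_def
proof
  show "c \<in> {Re (variance s H) | s. braket s s = 1}"
    using assms(1)[OF assms(2)] assms(2-4) by force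
  show "\<forall>x\<in>{Re (variance s H) | s. braket s s = 1}. x \<le> c"
    using assms(1) by force
qed

theorem mainTheorem8:
  fixes B \<phi> \<alpha> \<psi> :: real
  assumes "0 \<le> \<alpha>" "\<alpha> \<le> pi/2" "-pi \<le> \<psi>" "\<psi> \<le> pi"
  defines "F \<equiv> qfim (Psi (probe \<phi> \<alpha> \<psi>)) \<phi> B"
  shows "F 1 1 = 8 * (sin (B/2))^2 * (1 - sin (2*\<alpha>) * cos (\<psi> + B))
       \<and> F 2 2 = 4 * (sin (2*\<alpha>))^2
       \<and> F 1 2 = 0 \<and> F 2 1 = 0
       \<and> (\<alpha> = pi/4 \<and> \<psi> = pi - B \<longrightarrow>
            F 1 1 = 16 * (sin (B/2))^2 \<and> F 2 2 = 4
          \<and> is_max_of {Re (variance s (effH Uop \<phi> B 1)) | s. braket s s = 1} (F 1 1 / 4)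
          \<and> is_max_of {Re (variance s (effH Uop \<phi> B 2)) | s. braket s s = 1} (F 2 2 / 4))"
proof -
  let ?e = "ep \<phi>" and ?eb = "em \<phi>" and ?E = "em B" and ?F = "ep B" and ?w = "ep \<psi>" and ?wb = "em \<psi>"
  let ?ca = "complex_of_real (cos \<alpha>)" and ?sa = "complex_of_real (sin \<alpha>)"
  have casa: "?ca * ?ca + ?sa * ?sa = 1"
  proof -
    have "cos \<alpha> * cos \<alpha> + sin \<alpha> * sin \<alpha> = 1" by (rule sin_cos_squared_add3)
    then have "complex_of_real (cos \<alpha> * cos \<alpha> + sin \<alpha> * sin \<alpha>) = 1" by simp
    then show ?thesis by (simp only: of_real_add of_real_mult)
  qed
  note Q = qfim_gen[OF ep_em[of \<phi>] em_ep[of B] ep_em[of \<psi>] casa cnj_ep cnj_em cnj_em cnj_ep cnj_ep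
     complex_cnj_complex_of_real complex_cnj_complex_of_real]
  have u: "Psi (probe \<phi> \<alpha> \<psi>) \<phi> B = vec3 ((?ca * ?E + ?w * ?sa * ?F) * ?eb / 2) ((?ca * ?E - ?w * ?sa * ?F) * r2 / 2) ((?ca * ?E + ?w * ?sa * ?F) * ?e / 2)"
    unfolding Psi_eq Um_x probe_x by (rule u_gen[OF ep_em em_ep])
  have d1: "pd1 (Psi (probe \<phi> \<alpha> \<psi>)) \<phi> B = vec3 (\<i> * (?ca * (1 - ?E) + ?w * ?sa * (1 - ?F)) * ?eb / 2) 0 (- \<i> * (?ca * (1 - ?E) + ?w * ?sa * (1 - ?F)) * ?e / 2)"
    unfolding pd1_Psi DUp_x probe_x by (rule d1_gen[OF ep_em em_ep])
  have d2: "pd2 (Psi (probe \<phi> \<alpha> \<psi>)) \<phi> B = vec3 (- \<i> * (?ca * ?E - ?w * ?sa * ?F) * ?eb / 2) (- \<i> * (?ca * ?E + ?w * ?sa * ?F) * r2 / 2) (- \<i> * (?ca * ?E - ?w * ?sa * ?F) * ?e / 2)"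
    unfolding pd2_Psi DUb_x probe_x by (rule d2_gen[OF ep_em em_ep])
  have F11c: "(2 - ?E - ?F) / 2 * (1 - ?ca * ?sa * (?w * ?F + ?wb * ?E)) =
     complex_of_real (2 * (sin (B/2))^2 * (1 - sin (2*\<alpha>) * cos (\<psi> + B)))"
  proof -
    have 1: "?w * ?F + ?wb * ?E = 2 * complex_of_real (cos (\<psi> + B))"
      by (simp add: ep_mult em_mult epem_sum)
    have r: "2 * (2 * (sin (B/2))^2) = 2 - 2 * cos B" using cos_double_sin[of "B/2"] by simp
    have 2: "2 - ?E - ?F = 2 * complex_of_real (2 * (sin (B/2))^2)"
    proof -
      have "2 * complex_of_real (2 * (sin (B/2))^2) = complex_of_real (2 - 2 * cos B)"
        using r by (metis of_real_mult of_real_numeral)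
      also have "\<dots> = 2 - (?E + ?F)" using epem_sum[of B] by (simp add: algebra_simps)
      finally show ?thesis by (simp add: algebra_simps)
    qed
    show ?thesis unfolding 1 2 sin_double by (simp add: algebra_simps)
  qed
  let ?D1 = "pd1 (Psi (probe \<phi> \<alpha> \<psi>)) \<phi> B" and ?D2 = "pd2 (Psi (probe \<phi> \<alpha> \<psi>)) \<phi> B"
    and ?U = "Psi (probe \<phi> \<alpha> \<psi>) \<phi> B"
  have Fs: "F 1 1 = 4 * Re (braket ?D1 ?D1 - braket ?D1 ?U * braket ?U ?D1)"
    "F 2 2 = 4 * Re (braket ?D2 ?D2 - braket ?D2 ?U * braket ?U ?D2)"
    "F 1 2 = 4 * Re (braket ?D1 ?D2 - braket ?D1 ?U * braket ?U ?D2)"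
    "F 2 1 = 4 * Re (braket ?D2 ?D1 - braket ?D2 ?U * braket ?U ?D1)"
    unfolding F_def qfim_def Let_def by simp_all
  have F11: "F 1 1 = 8 * (sin (B/2))^2 * (1 - sin (2*\<alpha>) * cos (\<psi> + B))"
    unfolding Fs u d1 Q(1) F11c by simp
  have F22: "F 2 2 = 4 * (sin (2*\<alpha>))^2"
    unfolding Fs u d2 Q(2) sin_double by (simp add: power2_eq_square flip: of_real_mult)
  have F12: "F 1 2 = 0" and F21: "F 2 1 = 0"
    unfolding Fs u d1 d2 Q(3,4) by simp_all
  have special: "F 1 1 = 16 * (sin (B/2))^2 \<and> F 2 2 = 4
          \<and> is_max_of {Re (variance s (effH Uop \<phi> B 1)) | s. braket s s = 1} (F 1 1 / 4)
          \<and> is_max_of {Re (variance s (effH Uop \<phi> B 2)) | s. braket s s = 1} (F 2 2 / 4)"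
    if "\<alpha> = pi/4 \<and> \<psi> = pi - B"
  proof -
    have "2*\<alpha> = pi/2" using that by simp
    then have s1: "sin (2*\<alpha>) = 1" by (metis sin_pi_half)
    have c1: "cos (\<psi> + B) = -1" using that by simp
    have A: "F 1 1 = 16 * (sin (B/2))^2" using F11 s1 c1 by simp
    have Bq: "F 2 2 = 4" using F22 s1 by simp
    have r: "4 * (sin (B/2))^2 = 2 - 2 * cos B" using cos_double_sin[of "B/2"] by simp
    have cB: "complex_of_real (4 * (sin (B/2))^2) = 2 - ?E - ?F"
    proof -
      have "complex_of_real (4 * (sin (B/2))^2) = complex_of_real (2 - 2 * cos B)" using r by simp
      also have "\<dots> = 2 - (?E + ?F)" using epem_sum[of B] by (simp add: algebra_simps)
      finally show ?thesis by (simp add: algebra_simps)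
    qed
    have M1: "is_max_of {Re (variance s (effH Uop \<phi> B 1)) | s. braket s s = 1} (4 * (sin (B/2))^2)"
      unfolding effH1
      apply (rule max_from_formula[where w = "vec3 ((?E - ?F) * ?eb * r2 / 4) (1 - (?E + ?F) / 2) ((?E - ?F) * ?e * r2 / 4)"
            and sx = "vec3 (?eb * r2 / 2) 0 (- ?e * r2 / 2)"])
         apply (rule var_formula)
           apply (subst cB, rule Ax_sq[OF ep_em em_ep cnj_ep cnj_em cnj_em cnj_ep])
          apply assumption
         apply (rule Ax_herm[OF cnj_ep cnj_em cnj_em cnj_ep])
      using Ax_att[OF ep_em[of \<phi>] em_ep[of B] cnj_ep cnj_em cnj_em cnj_ep] by simp_all
    have M2: "is_max_of {Re (variance s (effH Uop \<phi> B 2)) | s. braket s s = 1} 1"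
      unfolding effH2
      apply (rule max_from_formula[where w = "vec3 (?eb * r2 / 2) 0 (- ?e * r2 / 2)"
            and sx = "vec3 (?eb * r2 / 2) 0 (?e * r2 / 2)"])
         apply (rule var_formula)
           apply (unfold of_real_1, rule G_sq[OF ep_em cnj_ep cnj_em])
          apply assumption
         apply (rule G_herm[OF cnj_ep cnj_em])
      using G_att[OF ep_em[of \<phi>] cnj_ep cnj_em] by simp_all
    show ?thesis using A Bq M1 M2 by simp
  qed
  show ?thesis using F11 F22 F12 F21 special by blast
qed
end
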